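(* For any connected graphs $G$ and $H$, $$\mu_t(G\,\Box\,H)\le \min\{(n(G)-|\mathcal{P}(G)|)\,\mu_t(H),\ (n(H)-|\mathcal{P}(H)|)\,\mu_t(G)\}.$$
   Context: All graphs are finite, simple and undirected; $n(G)$ denotes the order of $G$ and $N_G[v]$ the closed neighborhood of $v$. The Cartesian product $G\,\Box\,H$ has vertex set $V(G)\times V(H)$, with $(x,y)$ adjacent to $(x',y')$ iff either $x=x'$ and $yy'\in E(H)$, or $xx'\in E(G)$ and $y=y'$. Let $F$ be a connected graph and $X\subseteq V(F)$. Two vertices $x,y\in V(F)$ are $X$-visible if there exists a shortest $x,y$-path in $F$ none of whose internal vertices belongs to $X$. $X$ is a total mutual-visibility set of $F$ if every two vertices of $F$ are $X$-visible (the empty set is allowed). $\mu_t(F)$ is the maximum cardinality of a total mutual-visibility set of $F$. $\mathcal{P}(F)$ is the set of vertices $v$ of $F$ for which there exist two distinct vertices $u,w\in V(F)$ with $N_F[u]\cap N_F[w]=\{v\}$. *)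

theory Defs
  imports Main
begin

definition simple_graph :: "'a set \<Rightarrow> ('a \<Rightarrow> 'a \<Rightarrow> bool) \<Rightarrow> bool" where
  "simple_graph V E \<longleftrightarrow> finite V \<and>
     (\<forall>x y. E x y \<longrightarrow> x \<in> V \<and> y \<in> V) \<and>
     (\<forall>x y. E x y \<longrightarrow> E y x) \<and> (\<forall>x. \<not> E x x)"

definition is_walk :: "'a set \<Rightarrow> ('a \<Rightarrow> 'a \<Rightarrow> bool) \<Rightarrow> 'a list \<Rightarrow> bool" where
  "is_walk V E p \<longleftrightarrow> p \<noteq> [] \<and> set p \<subseteq> V \<and>
     (\<forall>i. Suc i < length p \<longrightarrow> E (p ! i) (p ! Suc i))"

definition walk_betw :: "'a set \<Rightarrow> ('a \<Rightarrow> 'a \<Rightarrow> bool) \<Rightarrow> 'a \<Rightarrow> 'a list \<Rightarrow> 'a \<Rightarrow> bool" where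
  "walk_betw V E x p y \<longleftrightarrow> is_walk V E p \<and> hd p = x \<and> last p = y"

definition connected_graph :: "'a set \<Rightarrow> ('a \<Rightarrow> 'a \<Rightarrow> bool) \<Rightarrow> bool" where
  "connected_graph V E \<longleftrightarrow> simple_graph V E \<and> V \<noteq> {} \<and>
     (\<forall>x\<in>V. \<forall>y\<in>V. \<exists>p. walk_betw V E x p y)"

definition gdist :: "'a set \<Rightarrow> ('a \<Rightarrow> 'a \<Rightarrow> bool) \<Rightarrow> 'a \<Rightarrow> 'a \<Rightarrow> nat" where
  "gdist V E x y = (LEAST n. \<exists>p. walk_betw V E x p y \<and> length p = Suc n)"

definition shortest_path :: "'a set \<Rightarrow> ('a \<Rightarrow> 'a \<Rightarrow> bool) \<Rightarrow> 'a \<Rightarrow> 'a list \<Rightarrow> 'a \<Rightarrow> bool" where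
  "shortest_path V E x p y \<longleftrightarrow> walk_betw V E x p y \<and> length p = Suc (gdist V E x y)"

definition internal :: "'a list \<Rightarrow> 'a set" where
  "internal p = set (butlast (tl p))"

definition visible :: "'a set \<Rightarrow> ('a \<Rightarrow> 'a \<Rightarrow> bool) \<Rightarrow> 'a set \<Rightarrow> 'a \<Rightarrow> 'a \<Rightarrow> bool" where
  "visible V E X x y \<longleftrightarrow> (\<exists>p. shortest_path V E x p y \<and> internal p \<inter> X = {})"

definition total_mv_set :: "'a set \<Rightarrow> ('a \<Rightarrow> 'a \<Rightarrow> bool) \<Rightarrow> 'a set \<Rightarrow> bool" where
  "total_mv_set V E X \<longleftrightarrow> X \<subseteq> V \<and> (\<forall>x\<in>V. \<forall>y\<in>V. visible V E X x y)"

definition mu_t :: "'a set \<Rightarrow> ('a \<Rightarrow> 'a \<Rightarrow> bool) \<Rightarrow> nat" where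
  "mu_t V E = Max (card ` {X. total_mv_set V E X})"

definition closed_nbhd :: "'a set \<Rightarrow> ('a \<Rightarrow> 'a \<Rightarrow> bool) \<Rightarrow> 'a \<Rightarrow> 'a set" where
  "closed_nbhd V E v = {u\<in>V. u = v \<or> E v u}"

definition Pset :: "'a set \<Rightarrow> ('a \<Rightarrow> 'a \<Rightarrow> bool) \<Rightarrow> 'a set" where
  "Pset V E = {v\<in>V. \<exists>u\<in>V. \<exists>w\<in>V. u \<noteq> w \<and> closed_nbhd V E u \<inter> closed_nbhd V E w = {v}}"

definition cart_V :: "'a set \<Rightarrow> 'b set \<Rightarrow> ('a \<times> 'b) set" where
  "cart_V VG VH = VG \<times> VH"

definition cart_E :: "'a set \<Rightarrow> ('a \<Rightarrow> 'a \<Rightarrow> bool) \<Rightarrow> 'b set \<Rightarrow> ('b \<Rightarrow> 'b \<Rightarrow> bool)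
    \<Rightarrow> ('a \<times> 'b) \<Rightarrow> ('a \<times> 'b) \<Rightarrow> bool" where
  "cart_E VG EG VH EH p q \<longleftrightarrow> p \<in> VG \<times> VH \<and> q \<in> VG \<times> VH \<and>
     ((fst p = fst q \<and> EH (snd p) (snd q)) \<or> (EG (fst p) (fst q) \<and> snd p = snd q))"

end

theory Submission imports Defs begin

lemma walk_single[simp]: "is_walk V E [x] \<longleftrightarrow> x \<in> V"
  by (auto simp: is_walk_def)

lemma walk_cons2[simp]: "is_walk V E (x # y # p) \<longleftrightarrow> x \<in> V \<and> E x y \<and> is_walk V E (y # p)"
proof
  assume h: "is_walk V E (x # y # p)"
  have "\<forall>i. Suc i < length (y#p) \<longrightarrow> E ((y#p) ! i) ((y#p) ! Suc i)"
  proof (intro allI impI)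
    fix i assume "Suc i < length (y#p)"
    then have "Suc (Suc i) < length (x#y#p)" by simp
    with h have "E ((x#y#p) ! Suc i) ((x#y#p) ! Suc (Suc i))" unfolding is_walk_def by blast
    then show "E ((y#p) ! i) ((y#p) ! Suc i)" by simp
  qed
  moreover have "E x y"
  proof -
    have "Suc 0 < length (x#y#p)" by simp
    with h have "E ((x#y#p) ! 0) ((x#y#p) ! Suc 0)" unfolding is_walk_def by blast
    then show ?thesis by simp
  qed
  moreover have "x \<in> V" "set (y#p) \<subseteq> V" using h unfolding is_walk_def by auto
  ultimately show "x \<in> V \<and> E x y \<and> is_walk V E (y # p)"
    unfolding is_walk_def by blast
next
  assume h: "x \<in> V \<and> E x y \<and> is_walk V E (y # p)"
  show "is_walk V E (x # y # p)" unfolding is_walk_def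
  proof (intro conjI allI impI)
    show "set (x # y # p) \<subseteq> V" using h by (auto simp: is_walk_def)
    fix i assume i: "Suc i < length (x # y # p)"
    show "E ((x # y # p) ! i) ((x # y # p) ! Suc i)"
    proof (cases i)
      case 0 then show ?thesis using h by simp
    next
      case (Suc j) then show ?thesis using h i unfolding is_walk_def by auto
    qed
  qed simp
qed

lemma walk_nonempty: "is_walk V E p \<Longrightarrow> p \<noteq> []" by (simp add: is_walk_def)

lemma walk_set: "is_walk V E p \<Longrightarrow> set p \<subseteq> V" by (simp add: is_walk_def)

lemma walk_append: "is_walk V E p \<Longrightarrow> is_walk V E q \<Longrightarrow> last p = hd q \<Longrightarrow> is_walk V E (p @ tl q)"
proof (induction p rule: induct_list012)
  case 1 then show ?case by (simp add: is_walk_def)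
next
  case (2 x) then show ?case by (cases q) auto
next
  case (3 x y r) then show ?case by auto
qed

lemma walk_map: 
  assumes "\<And>x. x \<in> V \<Longrightarrow> f x \<in> V'" "\<And>x y. E x y \<Longrightarrow> x \<in> V \<Longrightarrow> y \<in> V \<Longrightarrow> E' (f x) (f y)"
  shows "is_walk V E p \<Longrightarrow> is_walk V' E' (map f p)"
proof (induction p rule: induct_list012)
  case 1 then show ?case by (simp add: is_walk_def)
next
  case (2 x) then show ?case using assms by auto
next
  case (3 x y r) then show ?case using assms by (auto dest: walk_set)
qed

lemma gdist_le: "walk_betw V E x p y \<Longrightarrow> Suc (gdist V E x y) \<le> length p"
proof -
  assume w: "walk_betw V E x p y"
  then have "p \<noteq> []" by (simp add: walk_betw_def is_walk_def)
  then have l: "length p = Suc (length p - 1)" by simp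
  have "gdist V E x y \<le> length p - 1" unfolding gdist_def
    by (rule Least_le) (use w l in blast)
  then show ?thesis using l by simp
qed

lemma shortest_exists: "walk_betw V E x p y \<Longrightarrow> \<exists>q. shortest_path V E x q y"
proof -
  assume w: "walk_betw V E x p y"
  then have "\<exists>n q. walk_betw V E x q y \<and> length q = Suc n"
    by (metis Suc_pred is_walk_def length_greater_0_conv walk_betw_def)
  then obtain n where "\<exists>q. walk_betw V E x q y \<and> length q = Suc n" by blast
  then have "\<exists>q. walk_betw V E x q y \<and> length q = Suc (gdist V E x y)"
    unfolding gdist_def by (rule LeastI)
  then show ?thesis unfolding shortest_path_def by blast
qed


lemma proj_walk:
  shows "is_walk (VG \<times> VH) (cart_E VG EG VH EH) p \<Longrightarrow>
    (\<exists>q. walk_betw VH EH (snd (hd p)) q (snd (last p)) \<and> length q < length p) \<or>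
    (is_walk VH EH (map snd p) \<and> (\<forall>x\<in>set p. fst x = fst (hd p)))"
proof (induction p rule: induct_list012)
  case 1 then show ?case by (simp add: is_walk_def)
next
  case (2 x) then show ?case by auto
next
  case (3 x y r)
  have w: "is_walk (VG \<times> VH) (cart_E VG EG VH EH) (y # r)" and e: "cart_E VG EG VH EH x y"
    and xV: "x \<in> VG \<times> VH" using 3(3) by auto
  from 3(2)[OF w] have IH: "(\<exists>q. walk_betw VH EH (snd y) q (snd (last (y#r))) \<and> length q < length (y#r)) \<or>
    (is_walk VH EH (map snd (y#r)) \<and> (\<forall>z\<in>set (y#r). fst z = fst y))" by simp
  from e have "(fst x = fst y \<and> EH (snd x) (snd y)) \<or> (EG (fst x) (fst y) \<and> snd x = snd y)"
    by (simp add: cart_E_def)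
  then show ?case
  proof
    assume h: "fst x = fst y \<and> EH (snd x) (snd y)"
    from IH show ?thesis
    proof
      assume "\<exists>q. walk_betw VH EH (snd y) q (snd (last (y#r))) \<and> length q < length (y#r)"
      then obtain q where q: "walk_betw VH EH (snd y) q (snd (last (y#r)))" "length q < length (y#r)" by blast
      then obtain q' where q': "q = snd y # q'" unfolding walk_betw_def is_walk_def by (cases q) auto
      have "walk_betw VH EH (snd x) (snd x # q) (snd (last (x#y#r)))"
        using q q' h xV unfolding walk_betw_def by auto
      then show ?thesis using q by (intro disjI1 exI[of _ "snd x # q"]) auto
    next
      assume "is_walk VH EH (map snd (y#r)) \<and> (\<forall>z\<in>set (y#r). fst z = fst y)"
      then show ?thesis using h xV by (intro disjI2) auto
    qed
  next
    assume h: "EG (fst x) (fst y) \<and> snd x = snd y"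
    from IH show ?thesis
    proof
      assume "\<exists>q. walk_betw VH EH (snd y) q (snd (last (y#r))) \<and> length q < length (y#r)"
      then show ?thesis using h by (intro disjI1) auto
    next
      assume a: "is_walk VH EH (map snd (y#r)) \<and> (\<forall>z\<in>set (y#r). fst z = fst y)"
      have "walk_betw VH EH (snd x) (map snd (y#r)) (snd (last (x#y#r)))"
        using a h unfolding walk_betw_def by (simp add: last_map)
      then show ?thesis by (intro disjI1 exI[of _ "map snd (y#r)"]) auto
    qed
  qed
qed


lemma internal_map: "internal (map f p) = f ` internal p"
  by (simp add: internal_def map_tl[symmetric] map_butlast[symmetric])

lemma internal_sub: "internal p \<subseteq> set p"
  unfolding internal_def by (cases p) (auto dest: in_set_butlastD)

lemma layer_visible:
  assumes cH: "connected_graph VH EH" and g: "g \<in> VG" and h: "h \<in> VH" "h' \<in> VH"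
    and vis: "visible (VG \<times> VH) (cart_E VG EG VH EH) X (g,h) (g,h')"
  shows "visible VH EH {y. (g,y) \<in> X} h h'"
proof -
  let ?P = "VG \<times> VH" and ?E = "cart_E VG EG VH EH"
  obtain p where p: "shortest_path ?P ?E (g,h) p (g,h')" and pi: "internal p \<inter> X = {}"
    using vis unfolding visible_def by blast
  obtain q0 where q0w: "walk_betw VH EH h q0 h'" using cH h unfolding connected_graph_def by blast
  then obtain q0 where q0: "shortest_path VH EH h q0 h'" using shortest_exists[OF q0w] by blast
  have "is_walk ?P ?E (map (Pair g) q0)"
    by (rule walk_map[where V=VH and f="Pair g" and E=EH]) (use q0 g in \<open>auto simp: shortest_path_def walk_betw_def cart_E_def\<close>)
  moreover have "q0 \<noteq> []" using q0 by (simp add: shortest_path_def walk_betw_def is_walk_def)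
  ultimately have "walk_betw ?P ?E (g,h) (map (Pair g) q0) (g,h')"
    using q0 by (simp add: walk_betw_def shortest_path_def hd_map last_map)
  from gdist_le[OF this] have lp: "length p \<le> Suc (gdist VH EH h h')"
    using p q0 by (simp add: shortest_path_def)
  have pw: "is_walk ?P ?E p" and ph: "hd p = (g,h)" and pl: "last p = (g,h')" and pne: "p \<noteq> []"
    using p by (auto simp: shortest_path_def walk_betw_def is_walk_def)
  from proj_walk[OF pw] ph pl have
    "(\<exists>q. walk_betw VH EH h q h' \<and> length q < length p) \<or>
     (is_walk VH EH (map snd p) \<and> (\<forall>x\<in>set p. fst x = g))" by simp
  then show ?thesis
  proof
    assume "\<exists>q. walk_betw VH EH h q h' \<and> length q < length p"
    then obtain q where "walk_betw VH EH h q h'" "length q < length p" by blast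
    have "Suc (gdist VH EH h h') \<le> length q" by (rule gdist_le) fact
    with \<open>length q < length p\<close> lp have False by linarith
    then show ?thesis ..
  next
    assume a: "is_walk VH EH (map snd p) \<and> (\<forall>x\<in>set p. fst x = g)"
    then have w: "walk_betw VH EH h (map snd p) h'" using ph pl pne
      by (simp add: walk_betw_def hd_map last_map)
    with gdist_le[OF w] lp have "shortest_path VH EH h (map snd p) h'"
      by (simp add: shortest_path_def)
    moreover have "internal (map snd p) \<inter> {y. (g,y) \<in> X} = {}"
    proof -
      { fix y assume y: "y \<in> internal (map snd p)" "(g,y) \<in> X"
        then obtain z where z: "z \<in> internal p" "y = snd z" by (auto simp: internal_map)
        have "z \<in> set p" by (rule subsetD[OF internal_sub z(1)])
        then have "fst z = g" using a by blast
        then have "z = (g,y)" using z(2) by (cases z) simp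
        then have "(g,y) \<in> internal p" using z(1) by simp
        then have False using y(2) pi by blast }
      then show ?thesis by blast
    qed
    ultimately show ?thesis unfolding visible_def by blast
  qed
qed


lemma pset_empty_layer:
  assumes sG: "simple_graph VG EG" and sH: "simple_graph VH EH"
    and gP: "g \<in> Pset VG EG" and h: "h \<in> VH"
    and X: "total_mv_set (VG \<times> VH) (cart_E VG EG VH EH) X"
  shows "(g,h) \<notin> X"
proof
  assume gX: "(g,h) \<in> X"
  let ?P = "VG \<times> VH" and ?E = "cart_E VG EG VH EH"
  have symG: "\<And>x y. EG x y \<Longrightarrow> EG y x" and irrG: "\<And>x. \<not> EG x x"
    and inG: "\<And>x y. EG x y \<Longrightarrow> x \<in> VG \<and> y \<in> VG"
    using sG unfolding simple_graph_def by blast+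
  have irrH: "\<And>x. \<not> EH x x" using sH unfolding simple_graph_def by blast
  obtain u w where uw: "u \<in> VG" "w \<in> VG" "u \<noteq> w"
    and N: "closed_nbhd VG EG u \<inter> closed_nbhd VG EG w = {g}" and gV: "g \<in> VG"
    using gP unfolding Pset_def by blast
  have memN: "\<And>a. a \<in> closed_nbhd VG EG u \<Longrightarrow> a \<in> closed_nbhd VG EG w \<Longrightarrow> a = g"
    using N by blast
  have gu: "g = u \<or> EG u g" and gw: "g = w \<or> EG w g"
    using N unfolding closed_nbhd_def by blast+
  have nuw: "\<not> EG u w"
  proof
    assume e: "EG u w"
    have "w = g" by (rule memN) (use e uw symG in \<open>auto simp: closed_nbhd_def\<close>)
    moreover have "u = g" by (rule memN) (use e uw symG in \<open>auto simp: closed_nbhd_def\<close>)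
    ultimately show False using uw by simp
  qed
  have eug: "EG u g" using gu gw nuw uw symG by metis
  have ewg: "EG w g" using gu gw nuw uw symG by metis
  have "is_walk ?P ?E [(u,h),(g,h),(w,h)]"
    using uw gV h eug ewg symG by (auto simp: cart_E_def)
  then have "walk_betw ?P ?E (u,h) [(u,h),(g,h),(w,h)] (w,h)" by (simp add: walk_betw_def)
  from gdist_le[OF this] have d: "Suc (gdist ?P ?E (u,h) (w,h)) \<le> 3" by simp
  have "visible ?P ?E X (u,h) (w,h)" using X uw h unfolding total_mv_set_def by blast
  then obtain p where p: "shortest_path ?P ?E (u,h) p (w,h)" and pi: "internal p \<inter> X = {}"
    unfolding visible_def by blast
  have pw: "is_walk ?P ?E p" and ph: "hd p = (u,h)" and pl: "last p = (w,h)" and lp: "length p \<le> 3"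
    using p d by (auto simp: shortest_path_def walk_betw_def)
  have pne: "p \<noteq> []" using pw by (simp add: is_walk_def)
  obtain a r where pa: "p = a # r" using pne by (cases p) auto
  show False
  proof (cases r)
    case Nil then show False using ph pl pa uw by simp
  next
    case (Cons z r2)
    show False
    proof (cases r2)
      case Nil
      then have "?E (u,h) (w,h)" using pw ph pl pa Cons by simp
      then show False using nuw uw by (auto simp: cart_E_def)
    next
      case (Cons b r3)
      then have r3: "r3 = []" using lp pa \<open>r = z # r2\<close> by simp
      then have pp: "p = [(u,h), z, (w,h)]" using pa \<open>r = z # r2\<close> Cons ph pl by simp
      then have e1: "?E (u,h) z" and e2: "?E z (w,h)" using pw by auto
      obtain za zb where zz: "z = (za, zb)" by (cases z)
      have "za \<in> VG" using e1 zz by (simp add: cart_E_def)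
      have "EG u za \<and> zb = h \<and> EG za w"
        using e1 e2 zz uw irrH by (auto simp: cart_E_def)
      then have "za = g" using memN symG \<open>za \<in> VG\<close> by (auto simp: closed_nbhd_def)
      moreover have "z \<in> internal p" using pp by (simp add: internal_def)
      ultimately show False using pi gX zz \<open>EG u za \<and> zb = h \<and> EG za w\<close> by blast
    qed
  qed
qed


lemma last_append_tl: "xs \<noteq> [] \<Longrightarrow> ys \<noteq> [] \<Longrightarrow> last xs = hd ys \<Longrightarrow> last (xs @ tl ys) = last ys"
  by (cases ys) auto

lemma prod_walk:
  assumes cG: "connected_graph VG EG" and cH: "connected_graph VH EH"
    and x: "x \<in> VG \<times> VH" and y: "y \<in> VG \<times> VH"
  shows "\<exists>p. walk_betw (VG \<times> VH) (cart_E VG EG VH EH) x p y"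
proof -
  obtain g h g' h' where xy: "x = (g,h)" "y = (g',h')" by (cases x, cases y) auto
  have gh: "g \<in> VG" "h \<in> VH" "g' \<in> VG" "h' \<in> VH" using x y xy by auto
  obtain p where p: "walk_betw VG EG g p g'" using cG gh unfolding connected_graph_def by blast
  obtain q where q: "walk_betw VH EH h q h'" using cH gh unfolding connected_graph_def by blast
  let ?P = "VG \<times> VH" and ?E = "cart_E VG EG VH EH"
  have w1: "is_walk ?P ?E (map (\<lambda>a. (a,h)) p)"
    by (rule walk_map[where V=VG and E=EG]) (use p gh in \<open>auto simp: walk_betw_def cart_E_def\<close>)
  have w2: "is_walk ?P ?E (map (Pair g') q)"
    by (rule walk_map[where V=VH and E=EH]) (use q gh in \<open>auto simp: walk_betw_def cart_E_def\<close>)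
  have pne: "p \<noteq> []" and qne: "q \<noteq> []" using p q by (auto simp: walk_betw_def is_walk_def)
  have l: "last (map (\<lambda>a. (a,h)) p) = hd (map (Pair g') q)"
    using p q pne qne by (simp add: walk_betw_def last_map hd_map)
  have "is_walk ?P ?E (map (\<lambda>a. (a,h)) p @ tl (map (Pair g') q))"
    by (rule walk_append[OF w1 w2 l])
  moreover have "hd (map (\<lambda>a. (a,h)) p @ tl (map (Pair g') q)) = x"
    using p pne xy by (simp add: walk_betw_def hd_map)
  moreover have "last (map (\<lambda>a. (a,h)) p @ tl (map (Pair g') q)) = y"
    using last_append_tl[OF _ _ l] p q pne qne xy by (simp add: walk_betw_def last_map)
  ultimately show ?thesis unfolding walk_betw_def by blast
qed

lemma mu_t_ge:
  assumes "simple_graph V E" "total_mv_set V E X"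
  shows "card X \<le> mu_t V E"
proof -
  have "card ` {X. total_mv_set V E X} \<subseteq> {..card V}"
    using assms by (auto simp: total_mv_set_def simple_graph_def intro: card_mono)
  then have "finite (card ` {X. total_mv_set V E X})" using finite_subset by blast
  then show ?thesis unfolding mu_t_def using assms(2) by (intro Max_ge) auto
qed

lemma mu_t_attained:
  assumes "simple_graph V E" "total_mv_set V E {}"
  shows "\<exists>X. total_mv_set V E X \<and> card X = mu_t V E"
proof -
  have "card ` {X. total_mv_set V E X} \<subseteq> {..card V}"
    using assms by (auto simp: total_mv_set_def simple_graph_def intro: card_mono)
  then have "finite (card ` {X. total_mv_set V E X})" using finite_subset by blast
  moreover have "card ` {X. total_mv_set V E X} \<noteq> {}" using assms(2) by blast
  ultimately have "Max (card ` {X. total_mv_set V E X}) \<in> card ` {X. total_mv_set V E X}"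
    by (rule Max_in)
  then show ?thesis unfolding mu_t_def by auto
qed

lemma bound1:
  assumes cG: "connected_graph VG EG" and cH: "connected_graph VH EH"
  shows "mu_t (cart_V VG VH) (cart_E VG EG VH EH) \<le> (card VG - card (Pset VG EG)) * mu_t VH EH"
proof -
  let ?P = "VG \<times> VH" and ?E = "cart_E VG EG VH EH"
  have sG: "simple_graph VG EG" and sH: "simple_graph VH EH" using cG cH by (auto simp: connected_graph_def)
  have sP: "simple_graph ?P ?E"
    using sG sH unfolding simple_graph_def cart_E_def by auto
  have "total_mv_set ?P ?E {}"
    unfolding total_mv_set_def visible_def
  proof (intro conjI ballI)
    fix x y assume "x \<in> ?P" "y \<in> ?P"
    then obtain p where "walk_betw ?P ?E x p y" using prod_walk[OF cG cH] by blast
    from shortest_exists[OF this] show "\<exists>p. shortest_path ?P ?E x p y \<and> internal p \<inter> {} = {}"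
      by simp
  qed simp
  then obtain X where X: "total_mv_set ?P ?E X" and cX: "card X = mu_t ?P ?E"
    using mu_t_attained[OF sP] by blast
  define Y where "Y g = {y. (g,y) \<in> X}" for g
  have Yb: "card (Y g) \<le> mu_t VH EH" if g: "g \<in> VG" for g
  proof (rule mu_t_ge[OF sH])
    show "total_mv_set VH EH (Y g)"
      unfolding total_mv_set_def
    proof (intro conjI ballI)
      show "Y g \<subseteq> VH" using X by (auto simp: Y_def total_mv_set_def)
      fix h h' assume h: "h \<in> VH" "h' \<in> VH"
      have "visible ?P ?E X (g,h) (g,h')" using X g h unfolding total_mv_set_def by blast
      from layer_visible[OF cH g h this] show "visible VH EH (Y g) h h'"
        unfolding Y_def .
    qed
  qed
  have fY: "finite (Y g)" for g
  proof (rule finite_subset)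
    show "Y g \<subseteq> VH" using X by (auto simp: Y_def total_mv_set_def)
  qed (use sH in \<open>simp add: simple_graph_def\<close>)
  have PG: "Pset VG EG \<subseteq> VG" by (auto simp: Pset_def)
  have fG: "finite VG" using sG by (simp add: simple_graph_def)
  have "X \<subseteq> (\<Union>g\<in>VG - Pset VG EG. Pair g ` Y g)"
  proof
    fix x assume x: "x \<in> X"
    obtain g h where xx: "x = (g,h)" by (cases x)
    have gh: "g \<in> VG" "h \<in> VH" using x xx X by (auto simp: total_mv_set_def)
    have "g \<notin> Pset VG EG" using pset_empty_layer[OF sG sH _ gh(2) X] x xx by blast
    then show "x \<in> (\<Union>g\<in>VG - Pset VG EG. Pair g ` Y g)" using gh x xx by (auto simp: Y_def)
  qed
  then have "card X \<le> card (\<Union>g\<in>VG - Pset VG EG. Pair g ` Y g)"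
    by (rule card_mono[rotated]) (use fG fY in auto)
  also have "\<dots> \<le> (\<Sum>g\<in>VG - Pset VG EG. card (Pair g ` Y g))"
    by (rule card_UN_le) (use fG in simp)
  also have "\<dots> \<le> (\<Sum>g\<in>VG - Pset VG EG. card (Y g))"
    by (rule sum_mono) (rule card_image_le, rule fY)
  also have "\<dots> \<le> card (VG - Pset VG EG) * mu_t VH EH"
    using sum_bounded_above[of "VG - Pset VG EG" "\<lambda>g. card (Y g)" "mu_t VH EH"] Yb by simp
  also have "card (VG - Pset VG EG) = card VG - card (Pset VG EG)"
    by (rule card_Diff_subset) (use PG fG finite_subset in auto)
  finally show ?thesis using cX by (simp add: cart_V_def)
qed

lemma iso_mu_t:
  fixes f :: "'a \<Rightarrow> 'b" and g :: "'b \<Rightarrow> 'a"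
  assumes gf: "\<And>x. g (f x) = x" and fg: "\<And>y. f (g y) = y"
    and V': "V' = f ` V" and E': "\<And>x y. E' x y = E (g x) (g y)"
  shows "mu_t V' E' = mu_t V E"
proof -
  have ginj: "\<And>a b. g a = g b \<longleftrightarrow> a = b" by (metis fg)
  have inV: "\<And>y. y \<in> V' \<longleftrightarrow> g y \<in> V" using V' by (metis fg gf image_iff)
  have walk: "is_walk V' E' q \<longleftrightarrow> is_walk V E (map g q)" for q
    unfolding is_walk_def using inV E' by auto
  have wb: "walk_betw V' E' x q y \<longleftrightarrow> walk_betw V E (g x) (map g q) (g y)" for x q y
    unfolding walk_betw_def walk by (auto simp: hd_map last_map ginj is_walk_def)
  have mm: "map g (map f p) = p" for p by (induction p) (auto simp: gf)
  have gd: "gdist V' E' x y = gdist V E (g x) (g y)" for x y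
  proof -
    have "(\<exists>p. walk_betw V' E' x p y \<and> length p = Suc n) \<longleftrightarrow>
          (\<exists>p. walk_betw V E (g x) p (g y) \<and> length p = Suc n)" for n
      unfolding wb by (metis length_map mm)
    then show ?thesis unfolding gdist_def by simp
  qed
  have sp: "shortest_path V' E' x q y \<longleftrightarrow> shortest_path V E (g x) (map g q) (g y)" for x q y
    unfolding shortest_path_def wb gd by simp
  have im: "g ` A \<inter> g ` B = g ` (A \<inter> B)" for A B by (auto simp: ginj)
  have vis: "visible V' E' X x y \<longleftrightarrow> visible V E (g ` X) (g x) (g y)" for X x y
  proof
    assume "visible V' E' X x y"
    then obtain q where "shortest_path V' E' x q y" "internal q \<inter> X = {}" unfolding visible_def by blast
    then show "visible V E (g ` X) (g x) (g y)" unfolding visible_def sp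
      by (intro exI[of _ "map g q"]) (simp add: internal_map im)
  next
    assume "visible V E (g ` X) (g x) (g y)"
    then obtain p where "shortest_path V E (g x) p (g y)" "internal p \<inter> g ` X = {}" unfolding visible_def by blast
    then have a: "shortest_path V E (g x) (map g (map f p)) (g y)" "internal p \<inter> g ` X = {}" by (simp_all only: mm)
    have "internal (map f p) \<inter> X = {}"
    proof -
      { fix z assume z: "z \<in> internal (map f p)" "z \<in> X"
        then obtain a where "a \<in> internal p" "z = f a" by (auto simp: internal_map)
        then have "g z \<in> internal p" by (simp add: gf)
        with z(2) a(2) have False by blast }
      then show ?thesis by blast
    qed
    with a(1) show "visible V' E' X x y" unfolding visible_def sp by blast
  qed
  have tot: "total_mv_set V' E' X \<longleftrightarrow> total_mv_set V E (g ` X)" for X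
  proof -
    have "X \<subseteq> V' \<longleftrightarrow> g ` X \<subseteq> V" using inV by auto
    moreover have "(\<forall>x\<in>V'. \<forall>y\<in>V'. visible V' E' X x y) \<longleftrightarrow>
                   (\<forall>x\<in>V. \<forall>y\<in>V. visible V E (g ` X) x y)"
      unfolding vis by (metis V' gf imageI inV fg)
    ultimately show ?thesis unfolding total_mv_set_def by simp
  qed
  have cg: "card (g ` X) = card X" for X by (rule card_image) (simp add: inj_on_def ginj)
  have "card ` {X. total_mv_set V' E' X} = card ` {Y. total_mv_set V E Y}"
  proof
    show "card ` {X. total_mv_set V' E' X} \<subseteq> card ` {Y. total_mv_set V E Y}"
      using tot cg by (metis (mono_tags, lifting) image_subset_iff mem_Collect_eq rev_image_eqI)
    show "card ` {Y. total_mv_set V E Y} \<subseteq> card ` {X. total_mv_set V' E' X}"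
    proof
      fix c assume "c \<in> card ` {Y. total_mv_set V E Y}"
      then obtain Y where Y: "total_mv_set V E Y" "c = card Y" by blast
      have "g ` f ` Y = Y" by (force simp: gf image_image)
      then have "total_mv_set V' E' (f ` Y)" "card (f ` Y) = c" using tot Y cg by metis+
      then show "c \<in> card ` {X. total_mv_set V' E' X}" by blast
    qed
  qed
  then show ?thesis unfolding mu_t_def by simp
qed

lemma swap_mu_t:
  "mu_t (cart_V VH VG) (cart_E VH EH VG EG) = mu_t (cart_V VG VH) (cart_E VG EG VH EH)"
  unfolding cart_V_def
  by (rule iso_mu_t[where f=prod.swap and g=prod.swap]) (auto simp: cart_E_def)

theorem theorem5p3:
  fixes VG :: "'a set" and EG :: "'a \<Rightarrow> 'a \<Rightarrow> bool"
    and VH :: "'b set" and EH :: "'b \<Rightarrow> 'b \<Rightarrow> bool"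
  assumes "connected_graph VG EG" and "connected_graph VH EH"
  shows "mu_t (cart_V VG VH) (cart_E VG EG VH EH)
           \<le> min ((card VG - card (Pset VG EG)) * mu_t VH EH)
                  ((card VH - card (Pset VH EH)) * mu_t VG EG)"
  using bound1[OF assms] bound1[OF assms(2,1)] swap_mu_t[where VG=VG and EG=EG and VH=VH and EH=EH] by simp

end
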